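(* Let $A$ be a complex vector space of countable dimension, and let $\mu\colon A^*\to A$ and $\nu\colon A^*\to A$ be linear maps such that $\alpha(\mu(\beta))=\beta(\nu(\alpha))$ for all $\alpha,\beta\in A^*$. Then $\mathrm{im}\,\mu$ and $\mathrm{im}\,\nu$ are finite-dimensional and $\dim\mathrm{im}\,\mu=\dim\mathrm{im}\,\nu$. *)

theory Defs
  imports Complex_Main "HOL-Library.Countable_Set"
begin

text \<open>A complex vector space is modelled as a type 'a with an abstract scalar
multiplication scale :: complex => 'a => 'a satisfying the vector_space locale.\<close>

definition dual_space :: "(complex \<Rightarrow> 'a::ab_group_add \<Rightarrow> 'a) \<Rightarrow> ('a \<Rightarrow> complex) set" where
  "dual_space scale = {f. Vector_Spaces.linear scale (*) f}"

definition linear_on_dual ::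
  "(complex \<Rightarrow> 'a::ab_group_add \<Rightarrow> 'a) \<Rightarrow> (('a \<Rightarrow> complex) \<Rightarrow> 'a) \<Rightarrow> bool" where
  "linear_on_dual scale m \<longleftrightarrow>
     (\<forall>f\<in>dual_space scale. \<forall>g\<in>dual_space scale. m (\<lambda>x. f x + g x) = m f + m g) \<and>
     (\<forall>c. \<forall>f\<in>dual_space scale. m (\<lambda>x. c * f x) = scale c (m f))"

definition countable_dimension :: "(complex \<Rightarrow> 'a::ab_group_add \<Rightarrow> 'a) \<Rightarrow> bool" where
  "countable_dimension scale \<longleftrightarrow>
     (\<exists>B. countable B \<and> \<not> module.dependent scale B \<and> module.span scale B = UNIV)"

definition finite_dim_set :: "(complex \<Rightarrow> 'a::ab_group_add \<Rightarrow> 'a) \<Rightarrow> 'a set \<Rightarrow> bool" where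
  "finite_dim_set scale S \<longleftrightarrow> (\<exists>B. finite B \<and> S \<subseteq> module.span scale B)"

end

theory Submission imports Defs "HOL-Analysis.Continuum_Not_Denumerable" begin

lemma C_vs: "vector_space ((*) :: complex \<Rightarrow> complex \<Rightarrow> complex)"
  by (simp add: vector_space_def algebra_simps)

lemma lin_iff:
  "Vector_Spaces.linear s1 s2 f \<longleftrightarrow>
  (vector_space s1 \<and> vector_space s2 \<and> (\<forall>x y. f (x + y) = f x + f y) \<and> (\<forall>c x. f (s1 c x) = s2 c (f x)))"
  unfolding Vector_Spaces.linear_def module_hom_def module_hom_axioms_def module_iff_vector_space by auto

lemma dual_extend:
  fixes scale :: "complex \<Rightarrow> 'a::ab_group_add \<Rightarrow> 'a"
  assumes vs: "vector_space scale" and ind: "\<not> module.dependent scale B"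
  shows "\<exists>g\<in>dual_space scale. \<forall>x\<in>B. g x = f x"
proof -
  interpret vector_space_pair scale "(*) :: complex \<Rightarrow> complex \<Rightarrow> complex"
    using vs C_vs by (simp add: vector_space_pair_def)
  from linear_independent_extend[OF ind, of f] show ?thesis
    by (auto simp: dual_space_def)
qed

lemma dual_lin:
  fixes scale :: "complex \<Rightarrow> 'a::ab_group_add \<Rightarrow> 'a"
  assumes "g \<in> dual_space scale"
  shows "Vector_Spaces.linear scale (*) g"
  using assms by (simp add: dual_space_def)

lemma dual_add:
  fixes scale :: "complex \<Rightarrow> 'a::ab_group_add \<Rightarrow> 'a"
  assumes "f \<in> dual_space scale" "g \<in> dual_space scale"
  shows "(\<lambda>x. f x + g x) \<in> dual_space scale"
  using assms unfolding dual_space_def lin_iff by (auto simp: algebra_simps)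

lemma dual_diff:
  fixes scale :: "complex \<Rightarrow> 'a::ab_group_add \<Rightarrow> 'a"
  assumes "f \<in> dual_space scale" "g \<in> dual_space scale"
  shows "(\<lambda>x. f x - g x) \<in> dual_space scale"
  using assms unfolding dual_space_def lin_iff by (auto simp: algebra_simps)

lemma dual_smult:
  fixes scale :: "complex \<Rightarrow> 'a::ab_group_add \<Rightarrow> 'a"
  assumes "f \<in> dual_space scale"
  shows "(\<lambda>x. c * f x) \<in> dual_space scale"
  using assms unfolding dual_space_def lin_iff by (auto simp: algebra_simps)

lemma dual_zero:
  fixes scale :: "complex \<Rightarrow> 'a::ab_group_add \<Rightarrow> 'a"
  assumes "vector_space scale"
  shows "(\<lambda>x. 0) \<in> dual_space scale"
  using assms C_vs unfolding dual_space_def lin_iff by auto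

lemma dual_sum:
  fixes scale :: "complex \<Rightarrow> 'a::ab_group_add \<Rightarrow> 'a"
  assumes "vector_space scale" "finite I" "\<And>i. i \<in> I \<Longrightarrow> f i \<in> dual_space scale"
  shows "(\<lambda>x. \<Sum>i\<in>I. c i * f i x) \<in> dual_space scale"
  using assms(2,3)
proof (induction I rule: finite_induct)
  case empty
  then show ?case using dual_zero[OF assms(1)] by simp
next
  case (insert a I)
  then show ?case using dual_add[OF dual_smult[of "f a" scale "c a"], of "\<lambda>x. \<Sum>i\<in>I. c i * f i x"]
    by simp
qed

lemma lod_zero:
  fixes scale :: "complex \<Rightarrow> 'a::ab_group_add \<Rightarrow> 'a"
  assumes "vector_space scale" "linear_on_dual scale m"
  shows "m (\<lambda>x. 0) = 0"
proof -
  have "m (\<lambda>x. 0 + 0) = m (\<lambda>x. 0) + m (\<lambda>x. 0)"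
    using conjunct1[OF assms(2)[unfolded linear_on_dual_def], rule_format, OF dual_zero[OF assms(1)] dual_zero[OF assms(1)]] by simp
  then show ?thesis by simp
qed

lemma lod_sum:
  fixes scale :: "complex \<Rightarrow> 'a::ab_group_add \<Rightarrow> 'a"
  assumes vs: "vector_space scale" and m: "linear_on_dual scale m"
    and "finite I" "\<And>i. i \<in> I \<Longrightarrow> f i \<in> dual_space scale"
  shows "m (\<lambda>x. \<Sum>i\<in>I. c i * f i x) = (\<Sum>i\<in>I. scale (c i) (m (f i)))"
  using assms(3,4)
proof (induction I rule: finite_induct)
  case empty
  then show ?case using lod_zero[OF vs m] by simp
next
  case (insert a I)
  have d1: "(\<lambda>x. c a * f a x) \<in> dual_space scale" using insert by (simp add: dual_smult)
  have d2: "(\<lambda>x. \<Sum>i\<in>I. c i * f i x) \<in> dual_space scale" using insert by (intro dual_sum[OF vs]) auto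
  have "m (\<lambda>x. \<Sum>i\<in>insert a I. c i * f i x) = m (\<lambda>x. c a * f a x + (\<Sum>i\<in>I. c i * f i x))"
    using insert by simp
  also have "\<dots> = m (\<lambda>x. c a * f a x) + m (\<lambda>x. \<Sum>i\<in>I. c i * f i x)"
    using conjunct1[OF m[unfolded linear_on_dual_def], rule_format, OF d1 d2] by simp
  also have "m (\<lambda>x. c a * f a x) = scale (c a) (m (f a))"
    using m insert unfolding linear_on_dual_def by blast
  finally show ?case using insert by simp
qed

lemma vandermonde:
  fixes c :: "complex \<Rightarrow> complex"
  assumes "finite S" "\<forall>n. (\<Sum>x\<in>S. c x * x ^ n) = 0" "y \<in> S"
  shows "c y = 0"
  using assms
proof (induction S arbitrary: c y rule: finite_induct)
  case empty
  then show ?case by simp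
next
  case (insert a S)
  have h: "\<forall>n. (\<Sum>x\<in>S. (c x * (x - a)) * x ^ n) = 0"
  proof
    fix n
    have "(\<Sum>x\<in>S. (c x * (x - a)) * x ^ n) = (\<Sum>x\<in>insert a S. c x * x ^ Suc n) - a * (\<Sum>x\<in>insert a S. c x * x ^ n)"
      using insert(1,2) by (simp add: sum_distrib_left sum_subtractf[symmetric] algebra_simps)
    then show "(\<Sum>x\<in>S. (c x * (x - a)) * x ^ n) = 0" using insert(4)[rule_format, of "Suc n"] insert(4)[rule_format, of n] by simp
  qed
  have cs: "\<forall>x\<in>S. c x = 0"
  proof
    fix x assume "x \<in> S"
    with insert.IH[OF h] have "c x * (x - a) = 0" by blast
    with \<open>x \<in> S\<close> insert(2) show "c x = 0" by auto
  qed
  have "(\<Sum>x\<in>insert a S. c x * x ^ 0) = 0" using insert(4) by blast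
  then have "c a = 0" using insert(1,2) cs by simp
  then show ?case using insert(5) cs by auto
qed

lemma dual_sep:
  fixes scale :: "complex \<Rightarrow> 'a::ab_group_add \<Rightarrow> 'a"
  assumes vs: "vector_space scale" and "v \<noteq> 0"
  shows "\<exists>g\<in>dual_space scale. g v = 1"
proof -
  have "\<not> module.dependent scale {v}"
    using assms vector_space.dependent_single[OF vs] by simp
  from dual_extend[OF vs this, of "\<lambda>_. 1"] show ?thesis by auto
qed

lemma finite_part:
  fixes scale :: "complex \<Rightarrow> 'a::ab_group_add \<Rightarrow> 'a"
    and \<mu> \<nu> :: "('a \<Rightarrow> complex) \<Rightarrow> 'a"
  assumes vs: "vector_space scale"
    and cd: "countable_dimension scale"
    and pair: "\<forall>\<alpha>\<in>dual_space scale. \<forall>\<beta>\<in>dual_space scale. \<alpha> (\<mu> \<beta>) = \<beta> (\<nu> \<alpha>)"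
  shows "finite_dim_set scale (\<mu> ` dual_space scale)"
proof (rule ccontr)
  interpret vector_space scale by fact
  define D where "D = dual_space scale"
  assume nf: "\<not> finite_dim_set scale (\<mu> ` dual_space scale)"
  obtain B where B: "B \<subseteq> \<mu> ` D" "independent B" "\<mu> ` D \<subseteq> span B"
    using maximal_independent_subset by blast
  have "infinite B" using nf B unfolding D_def finite_dim_set_def by blast
  then obtain w :: "nat \<Rightarrow> 'a" where w: "inj w" "range w \<subseteq> B"
    using infinite_countable_subset by blast
  have "\<forall>n. \<exists>b. b \<in> D \<and> \<mu> b = w n"
  proof
    fix n
    have "w n \<in> \<mu> ` D" using w(2) B(1) by auto
    then show "\<exists>b. b \<in> D \<and> \<mu> b = w n" by (auto simp: image_iff)
  qed
  then have "\<exists>\<beta>. \<forall>n. \<beta> n \<in> D \<and> \<mu> (\<beta> n) = w n" by (rule choice)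
  then obtain \<beta> where \<beta>: "\<And>n. \<beta> n \<in> D" "\<And>n. \<mu> (\<beta> n) = w n" by blast
  have indW: "independent (range w)" using independent_mono[OF B(2) w(2)] .
  have "\<forall>l::complex. \<exists>a. a \<in> D \<and> (\<forall>n. a (w n) = l ^ n)"
  proof
    fix l :: complex
    obtain a where "a \<in> D" "\<forall>x\<in>range w. a x = l ^ (inv w x)"
      using dual_extend[OF vs indW, of "\<lambda>x. l ^ (inv w x)"] unfolding D_def by blast
    then show "\<exists>a. a \<in> D \<and> (\<forall>n. a (w n) = l ^ n)" using w(1) by auto
  qed
  then have "\<exists>\<alpha>. \<forall>l. \<alpha> l \<in> D \<and> (\<forall>n. \<alpha> l (w n) = l ^ n)" by (rule choice)
  then obtain \<alpha> where \<alpha>: "\<And>l. \<alpha> l \<in> D" "\<And>l n. \<alpha> l (w n) = l ^ n" by blast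
  define v where "v l = \<nu> (\<alpha> l)" for l
  have bv: "\<beta> n (v l) = l ^ n" for n l
  proof -
    have "\<alpha> l (\<mu> (\<beta> n)) = \<beta> n (\<nu> (\<alpha> l))" using pair \<alpha>(1) \<beta>(1) unfolding D_def by blast
    then show ?thesis using \<alpha>(2) \<beta>(2) unfolding v_def by simp
  qed
  obtain Bc where Bc: "countable Bc" "independent Bc" "span Bc = UNIV"
    using cd unfolding countable_dimension_def by blast
  have "\<forall>l. \<exists>F. finite F \<and> F \<subseteq> Bc \<and> v l \<in> span F"
  proof
    fix l
    have "v l \<in> span Bc" using Bc by simp
    then obtain t r where "finite t" "t \<subseteq> Bc" "v l = (\<Sum>a\<in>t. scale (r a) a)"
      unfolding span_explicit by blast
    moreover have "(\<Sum>a\<in>t. scale (r a) a) \<in> span t"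
      by (intro span_sum span_scale span_base)
    ultimately show "\<exists>F. finite F \<and> F \<subseteq> Bc \<and> v l \<in> span F" by auto
  qed
  then have "\<exists>g. \<forall>l. finite (g l) \<and> g l \<subseteq> Bc \<and> v l \<in> span (g l)" by (rule choice)
  then obtain g where g: "\<And>l. finite (g l)" "\<And>l. g l \<subseteq> Bc" "\<And>l. v l \<in> span (g l)" by blast
  have "\<exists>F. infinite {l. g l = F}"
  proof (rule ccontr)
    assume "\<not> (\<exists>F. infinite {l. g l = F})"
    then have fin: "\<And>F. finite {l. g l = F}" by blast
    have "range g \<subseteq> {A. finite A \<and> A \<subseteq> Bc}" using g by auto
    then have "countable (range g)"
      using countable_Collect_finite_subset[OF Bc(1)] countable_subset by blast
    then have "countable (\<Union>F\<in>range g. {l. g l = F})"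
      using fin by (intro countable_UN) (auto intro: countable_finite)
    moreover have "(\<Union>F\<in>range g. {l. g l = F}) = (UNIV :: complex set)" by auto
    ultimately have "countable (UNIV :: complex set)" by simp
    then have "countable (Re ` UNIV)" by simp
    moreover have "Re ` UNIV = UNIV"
    proof -
      have "surj Re" by (rule surjI[of _ complex_of_real]) simp
      then show ?thesis by simp
    qed
    ultimately show False using uncountable_UNIV_real by simp
  qed
  then obtain F where infF: "infinite {l. g l = F}" by blast
  then have "{l. g l = F} \<noteq> {}" by (rule contrapos_nn) simp
  then obtain l0 where "g l0 = F" by blast
  then have F: "finite F" "F \<subseteq> Bc" using g by auto
  obtain L where L: "finite L" "card L = Suc (card F)" "L \<subseteq> {l. g l = F}"
    using infinite_arbitrarily_large[OF infF] by blast
  have injv: "inj_on v L"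
  proof (rule inj_onI)
    fix x y assume "v x = v y"
    then have "\<beta> 1 (v x) = \<beta> 1 (v y)" by simp
    then show "x = y" by (simp add: bv)
  qed
  have lin\<beta>: "Vector_Spaces.linear scale (*) (\<beta> n)" for n
    using \<beta>(1) unfolding D_def dual_space_def by blast
  have indV: "independent (v ` L)"
  proof
    assume "dependent (v ` L)"
    then obtain u where u: "\<exists>x\<in>v ` L. u x \<noteq> 0" "(\<Sum>x\<in>v ` L. scale (u x) x) = 0"
      using dependent_finite[of "v ` L"] L(1) by blast
    have "(\<Sum>l\<in>L. u (v l) * l ^ n) = 0" for n
    proof -
      interpret lb: Vector_Spaces.linear scale "(*)" "\<beta> n" by (rule lin\<beta>)
      have "\<beta> n (\<Sum>x\<in>v ` L. scale (u x) x) = 0" using u(2) by simp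
      then have "(\<Sum>x\<in>v ` L. u x * \<beta> n x) = 0" by (simp add: lb.sum lb.scale)
      then show ?thesis by (simp add: sum.reindex[OF injv] bv)
    qed
    then have "\<forall>l\<in>L. u (v l) = 0" using vandermonde[OF L(1), of "\<lambda>l. u (v l)"] by blast
    then show False using u(1) by blast
  qed
  have "v ` L \<subseteq> span F" using L g by auto
  from independent_span_bound[OF F(1) indV this] have "card (v ` L) \<le> card F" by blast
  moreover have "card (v ` L) = card L" using card_image[OF injv] .
  ultimately show False using L(2) by simp
qed


lemma dim_part:
  fixes scale :: "complex \<Rightarrow> 'a::ab_group_add \<Rightarrow> 'a"
    and \<mu> \<nu> :: "('a \<Rightarrow> complex) \<Rightarrow> 'a"
  assumes vs: "vector_space scale"
    and lnu: "linear_on_dual scale \<nu>"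
    and pair: "\<forall>\<alpha>\<in>dual_space scale. \<forall>\<beta>\<in>dual_space scale. \<alpha> (\<mu> \<beta>) = \<beta> (\<nu> \<alpha>)"
    and fd: "finite_dim_set scale (\<mu> ` dual_space scale)"
  shows "vector_space.dim scale (\<nu> ` dual_space scale) \<le> vector_space.dim scale (\<mu> ` dual_space scale)"
proof -
  interpret vector_space scale by fact
  define D where "D = dual_space scale"
  obtain Bf where Bf: "finite Bf" "\<mu> ` D \<subseteq> span Bf" using fd unfolding finite_dim_set_def D_def by blast
  obtain Bw where Bw: "Bw \<subseteq> \<mu> ` D" "independent Bw" "\<mu> ` D \<subseteq> span Bw"
    using maximal_independent_subset by blast
  have finBw: "finite Bw" using independent_span_bound[OF Bf(1) Bw(2)] Bw(1) Bf(2) by blast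
  have dimW: "dim (\<mu> ` D) = card Bw" using dim_unique[OF Bw(1) Bw(3) Bw(2)] by simp
  have "\<forall>b. \<exists>a. a \<in> D \<and> (\<forall>x\<in>Bw. a x = (if x = b then 1 else 0))"
  proof
    fix b
    show "\<exists>a. a \<in> D \<and> (\<forall>x\<in>Bw. a x = (if x = b then 1 else 0))"
      using dual_extend[OF vs Bw(2), of "\<lambda>x. if x = b then 1 else 0"] unfolding D_def by blast
  qed
  then have "\<exists>ab. \<forall>b. ab b \<in> D \<and> (\<forall>x\<in>Bw. ab b x = (if x = b then 1 else 0))" by (rule choice)
  then obtain ab where ab: "\<And>b. ab b \<in> D" "\<And>b x. x \<in> Bw \<Longrightarrow> ab b x = (if x = b then 1 else 0)" by blast
  have sub: "\<nu> ` D \<subseteq> span ((\<lambda>b. \<nu> (ab b)) ` Bw)"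
  proof
    fix y assume "y \<in> \<nu> ` D"
    then obtain \<alpha> where \<alpha>: "\<alpha> \<in> D" "y = \<nu> \<alpha>" by blast
    define s where "s = (\<lambda>x. \<Sum>b\<in>Bw. \<alpha> b * ab b x)"
    have sD: "s \<in> D" unfolding s_def D_def using dual_sum[OF vs finBw] ab(1) unfolding D_def by blast
    define a' where "a' = (\<lambda>x. \<alpha> x - s x)"
    have a'D: "a' \<in> D" unfolding a'_def using dual_diff \<alpha>(1) sD unfolding D_def by blast
    have a'0: "a' b = 0" if "b \<in> Bw" for b
    proof -
      have "s b = (\<Sum>b'\<in>Bw. \<alpha> b' * (if b = b' then 1 else 0))"
        unfolding s_def using ab(2)[OF that] by simp
      also have "\<dots> = (\<Sum>b'\<in>Bw. if b = b' then \<alpha> b' else 0)"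
        by (rule sum.cong) auto
      also have "\<dots> = \<alpha> b" using that finBw by (simp add: sum.delta)
      finally show ?thesis unfolding a'_def by simp
    qed
    have lina': "Vector_Spaces.linear scale (*) a'" using a'D unfolding D_def dual_space_def by blast
    have a'W: "a' (\<mu> \<beta>) = 0" if "\<beta> \<in> D" for \<beta>
    proof -
      interpret la: Vector_Spaces.linear scale "(*)" a' by (rule lina')
      have "\<mu> \<beta> \<in> span Bw" using Bw(3) that by blast
      then show ?thesis using la.eq_0_on_span[of Bw] a'0 by blast
    qed
    have "\<nu> a' = 0"
    proof (rule ccontr)
      assume "\<nu> a' \<noteq> 0"
      then obtain \<beta> where "\<beta> \<in> D" "\<beta> (\<nu> a') = 1" using dual_sep[OF vs] unfolding D_def by blast
      moreover have "a' (\<mu> \<beta>) = \<beta> (\<nu> a')" using pair a'D \<open>\<beta> \<in> D\<close> unfolding D_def by blast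
      ultimately show False using a'W by simp
    qed
    have "\<alpha> = (\<lambda>x. a' x + s x)" unfolding a'_def by simp
    then have "\<nu> \<alpha> = \<nu> a' + \<nu> s"
      using conjunct1[OF lnu[unfolded linear_on_dual_def], rule_format, OF a'D[unfolded D_def] sD[unfolded D_def]]
      by simp
    also have "\<nu> s = (\<Sum>b\<in>Bw. scale (\<alpha> b) (\<nu> (ab b)))"
      unfolding s_def using lod_sum[OF vs lnu finBw] ab(1) unfolding D_def by blast
    finally have "\<nu> \<alpha> = (\<Sum>b\<in>Bw. scale (\<alpha> b) (\<nu> (ab b)))" using \<open>\<nu> a' = 0\<close> by simp
    moreover have "(\<Sum>b\<in>Bw. scale (\<alpha> b) (\<nu> (ab b))) \<in> span ((\<lambda>b. \<nu> (ab b)) ` Bw)"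
      by (intro span_sum span_scale span_base) auto
    ultimately show "y \<in> span ((\<lambda>b. \<nu> (ab b)) ` Bw)" using \<alpha>(2) by simp
  qed
  have "dim (\<nu> ` D) \<le> card ((\<lambda>b. \<nu> (ab b)) ` Bw)"
    using dim_le_card[OF sub] finBw by blast
  also have "\<dots> \<le> card Bw" using card_image_le[OF finBw] .
  finally show ?thesis using dimW unfolding D_def by simp
qed

theorem lemmaA1:
  fixes scale :: "complex \<Rightarrow> 'a::ab_group_add \<Rightarrow> 'a"
    and \<mu> \<nu> :: "('a \<Rightarrow> complex) \<Rightarrow> 'a"
  assumes "vector_space scale"
    and "countable_dimension scale"
    and "linear_on_dual scale \<mu>"
    and "linear_on_dual scale \<nu>"
    and "\<forall>\<alpha>\<in>dual_space scale. \<forall>\<beta>\<in>dual_space scale. \<alpha> (\<mu> \<beta>) = \<beta> (\<nu> \<alpha>)"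
  shows "finite_dim_set scale (\<mu> ` dual_space scale)
       \<and> finite_dim_set scale (\<nu> ` dual_space scale)
       \<and> vector_space.dim scale (\<mu> ` dual_space scale) = vector_space.dim scale (\<nu> ` dual_space scale)"
proof -
  have sym: "\<forall>\<alpha>\<in>dual_space scale. \<forall>\<beta>\<in>dual_space scale. \<alpha> (\<nu> \<beta>) = \<beta> (\<mu> \<alpha>)"
    using assms(5) by metis
  have f1: "finite_dim_set scale (\<mu> ` dual_space scale)" using finite_part[OF assms(1,2,5)] .
  have f2: "finite_dim_set scale (\<nu> ` dual_space scale)" using finite_part[OF assms(1,2) sym] .
  have "vector_space.dim scale (\<nu> ` dual_space scale) \<le> vector_space.dim scale (\<mu> ` dual_space scale)"
    using dim_part[OF assms(1,4,5) f1] .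
  moreover have "vector_space.dim scale (\<mu> ` dual_space scale) \<le> vector_space.dim scale (\<nu> ` dual_space scale)"
    using dim_part[OF assms(1,3) sym f2] .
  ultimately show ?thesis using f1 f2 by simp
qed

end
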